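(* Let $\Sigma\in\mathbb{R}^{p\times p}$ be positive definite, $X\sim\mathcal{N}_p(0,\Sigma)$, $j\in[p]$ and $S\subset[p]\setminus\{j\}$. If $T_1,T_2\in\mathcal{N}_j(S)$, then $T_1\cup T_2\in\mathcal{N}_j(S)$.
   Context: For $S\subset[p]\setminus\{j\}$, $\beta_j(S)=\arg\min_{\beta\in\mathbb{R}^p,\ \operatorname{supp}(\beta)\subset S}\mathbb{E}[X_j-\beta^TX]^2$ (unique since $\Sigma$ is positive definite), and $\mathcal{N}_j(S)=\{T\subset[p]\setminus\{j\}:\beta_j(T)=\beta_j(S)\}$. *)

theory Defs
  imports "HOL-Probability.Probability"
begin

text \<open>Indices are [p] = {0..<p} (i.e. {..<p}); vectors in R^p are functions nat => real,
  matrices are functions nat => nat => real, only entries with indices < p matter.\<close>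

definition quad_form :: "nat \<Rightarrow> (nat \<Rightarrow> nat \<Rightarrow> real) \<Rightarrow> (nat \<Rightarrow> real) \<Rightarrow> real" where
  "quad_form p \<Sigma> a = (\<Sum>i<p. \<Sum>k<p. a i * \<Sigma> i k * a k)"

definition pos_def :: "nat \<Rightarrow> (nat \<Rightarrow> nat \<Rightarrow> real) \<Rightarrow> bool" where
  "pos_def p \<Sigma> \<longleftrightarrow> (\<forall>i<p. \<forall>k<p. \<Sigma> i k = \<Sigma> k i) \<and>
     (\<forall>a. (\<exists>i<p. a i \<noteq> 0) \<longrightarrow> quad_form p \<Sigma> a > 0)"

text \<open>X = (X_0,...,X_{p-1}) ~ N_p(0,\<Sigma>) on the probability space M, defined via the
  Cramer--Wold characterisation: every nontrivial linear combination a^T X is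
  N(0, a^T \<Sigma> a) distributed.\<close>
definition gaussian_vector ::
  "'s measure \<Rightarrow> nat \<Rightarrow> (nat \<Rightarrow> 's \<Rightarrow> real) \<Rightarrow> (nat \<Rightarrow> nat \<Rightarrow> real) \<Rightarrow> bool" where
  "gaussian_vector M p X \<Sigma> \<longleftrightarrow>
     prob_space M \<and> (\<forall>i<p. X i \<in> borel_measurable M) \<and>
     (\<forall>a. (\<exists>i<p. a i \<noteq> 0) \<longrightarrow>
        distributed M lborel (\<lambda>\<omega>. \<Sum>i<p. a i * X i \<omega>)
          (\<lambda>x. ennreal (normal_density 0 (sqrt (quad_form p \<Sigma> a)) x)))"

definition supp_in :: "(nat \<Rightarrow> real) \<Rightarrow> nat set \<Rightarrow> bool" where
  "supp_in \<beta> S \<longleftrightarrow> (\<forall>i. i \<notin> S \<longrightarrow> \<beta> i = 0)"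

definition pred_risk :: "'s measure \<Rightarrow> nat \<Rightarrow> (nat \<Rightarrow> 's \<Rightarrow> real) \<Rightarrow> nat \<Rightarrow> (nat \<Rightarrow> real) \<Rightarrow> real" where
  "pred_risk M p X j \<beta> = (\<integral>\<omega>. (X j \<omega> - (\<Sum>i<p. \<beta> i * X i \<omega>))\<^sup>2 \<partial>M)"

definition beta_j :: "'s measure \<Rightarrow> nat \<Rightarrow> (nat \<Rightarrow> 's \<Rightarrow> real) \<Rightarrow> nat \<Rightarrow> nat set \<Rightarrow> (nat \<Rightarrow> real)" where
  "beta_j M p X j S = (THE \<beta>. supp_in \<beta> S \<and>
      (\<forall>\<beta>'. supp_in \<beta>' S \<longrightarrow> pred_risk M p X j \<beta> \<le> pred_risk M p X j \<beta>'))"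

definition N_j :: "'s measure \<Rightarrow> nat \<Rightarrow> (nat \<Rightarrow> 's \<Rightarrow> real) \<Rightarrow> nat \<Rightarrow> nat set \<Rightarrow> nat set set" where
  "N_j M p X j S = {T. T \<subseteq> {..<p} - {j} \<and> beta_j M p X j T = beta_j M p X j S}"

end

theory Submission
  imports Defs
begin

definition Bf :: "nat \<Rightarrow> (nat \<Rightarrow> nat \<Rightarrow> real) \<Rightarrow> (nat \<Rightarrow> real) \<Rightarrow> (nat \<Rightarrow> real) \<Rightarrow> real" where
  "Bf p \<Sigma> a b = (\<Sum>i<p. \<Sum>k<p. a i * \<Sigma> i k * b k)"

definition Orth :: "nat \<Rightarrow> (nat \<Rightarrow> nat \<Rightarrow> real) \<Rightarrow> (nat \<Rightarrow> real) \<Rightarrow> nat set \<Rightarrow> bool" where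
  "Orth p \<Sigma> r T \<longleftrightarrow> (\<forall>d. supp_in d T \<longrightarrow> Bf p \<Sigma> r d = 0)"

lemma Q_Bf: "quad_form p \<Sigma> a = Bf p \<Sigma> a a"
  by (simp add: quad_form_def Bf_def)

lemma Bf_add2: "Bf p \<Sigma> a (\<lambda>k. b k + c k) = Bf p \<Sigma> a b + Bf p \<Sigma> a c"
  by (simp add: Bf_def algebra_simps sum.distrib)

lemma Bf_diff2: "Bf p \<Sigma> a (\<lambda>k. b k - c k) = Bf p \<Sigma> a b - Bf p \<Sigma> a c"
  by (simp add: Bf_def algebra_simps sum_subtractf)

lemma Bf_smult2: "Bf p \<Sigma> a (\<lambda>k. x * b k) = x * Bf p \<Sigma> a b"
  by (simp add: Bf_def algebra_simps sum_distrib_left)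

lemma Bf_diff1: "Bf p \<Sigma> (\<lambda>k. b k - c k) a = Bf p \<Sigma> b a - Bf p \<Sigma> c a"
  by (simp add: Bf_def algebra_simps sum_subtractf)

lemma Bf_smult1: "Bf p \<Sigma> (\<lambda>k. x * b k) a = x * Bf p \<Sigma> b a"
  by (simp add: Bf_def algebra_simps sum_distrib_left)

lemma Bf_sym:
  assumes "pos_def p \<Sigma>"
  shows "Bf p \<Sigma> a b = Bf p \<Sigma> b a"
proof -
  have s: "\<And>i k. i < p \<Longrightarrow> k < p \<Longrightarrow> \<Sigma> i k = \<Sigma> k i" using assms by (auto simp: pos_def_def)
  have "Bf p \<Sigma> a b = (\<Sum>k<p. \<Sum>i<p. a i * \<Sigma> i k * b k)"
    unfolding Bf_def by (rule sum.swap)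
  also have "\<dots> = Bf p \<Sigma> b a"
    unfolding Bf_def by (intro sum.cong refl) (simp add: s mult.commute mult.left_commute)
  finally show ?thesis .
qed

lemma Bf_zero2: "(\<And>i. d i = 0) \<Longrightarrow> Bf p \<Sigma> a d = 0"
  by (simp add: Bf_def)

lemma Q_nonneg:
  assumes "pos_def p \<Sigma>"
  shows "quad_form p \<Sigma> a \<ge> 0"
proof (cases "\<exists>i<p. a i \<noteq> 0")
  case True then show ?thesis using assms by (auto simp: pos_def_def intro: less_imp_le)
next
  case False then show ?thesis by (simp add: quad_form_def)
qed

lemma Q_le0:
  assumes "pos_def p \<Sigma>" "quad_form p \<Sigma> a \<le> 0" "i < p"
  shows "a i = 0"
  using assms by (auto simp: pos_def_def not_less[symmetric])

lemma Q_diff: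
  assumes "pos_def p \<Sigma>"
  shows "quad_form p \<Sigma> (\<lambda>i. r i - d i) = quad_form p \<Sigma> r - 2 * Bf p \<Sigma> r d + quad_form p \<Sigma> d"
  using Bf_sym[OF assms, of d r]
  by (simp add: Q_Bf Bf_diff1 Bf_diff2)

lemma exists_orth:
  assumes pd: "pos_def p \<Sigma>" and fin: "finite T"
  shows "T \<subseteq> {..<p} \<Longrightarrow> \<exists>\<beta>. supp_in \<beta> T \<and> Orth p \<Sigma> (\<lambda>i. y i - \<beta> i) T"
  using fin
proof (induction T arbitrary: y rule: finite_induct)
  case empty
  show ?case
    by (rule exI[of _ "\<lambda>_. 0"]) (auto simp: supp_in_def Orth_def intro!: Bf_zero2)
next
  case (insert k T')
  have kp: "k < p" and Tp: "T' \<subseteq> {..<p}" using insert.prems by auto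
  obtain \<beta>1 where b1: "supp_in \<beta>1 T'" and o1: "Orth p \<Sigma> (\<lambda>i. y i - \<beta>1 i) T'"
    using insert.IH[OF Tp] by blast
  obtain \<gamma> where g: "supp_in \<gamma> T'" and og: "Orth p \<Sigma> (\<lambda>i. (if i = k then 1 else 0) - \<gamma> i) T'"
    using insert.IH[OF Tp, of "\<lambda>i. if i = k then 1 else 0"] by blast
  define r1 where "r1 = (\<lambda>i. y i - \<beta>1 i)"
  define s where "s = (\<lambda>i. (if i = k then (1::real) else 0) - \<gamma> i)"
  have gk: "\<gamma> k = 0" using g insert.hyps by (auto simp: supp_in_def)
  have sk: "s k = 1" using gk by (simp add: s_def)
  have Qs: "quad_form p \<Sigma> s > 0"
    using pd kp sk unfolding pos_def_def by (metis one_neq_zero)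
  define c where "c = Bf p \<Sigma> r1 s / quad_form p \<Sigma> s"
  define \<beta> where "\<beta> = (\<lambda>i. \<beta>1 i + c * s i)"
  have rr: "(\<lambda>i. y i - \<beta> i) = (\<lambda>i. r1 i - c * s i)"
    by (auto simp: \<beta>_def r1_def)
  have Br: "\<And>x. Bf p \<Sigma> (\<lambda>i. r1 i - c * s i) x = Bf p \<Sigma> r1 x - c * Bf p \<Sigma> s x"
    by (simp add: Bf_diff1 Bf_smult1)
  have supp: "supp_in \<beta> (insert k T')"
    using b1 g by (auto simp: supp_in_def \<beta>_def s_def)
  have orth: "Orth p \<Sigma> (\<lambda>i. r1 i - c * s i) (insert k T')"
    unfolding Orth_def
  proof (intro allI impI)
    fix d assume d: "supp_in d (insert k T')"
    define d' where "d' = (\<lambda>i. if i = k then 0 else d i)"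
    have d'T: "supp_in d' T'" using d by (auto simp: supp_in_def d'_def)
    have deq: "d = (\<lambda>i. d k * s i + (d k * \<gamma> i + d' i))"
      by (rule ext) (auto simp: s_def d'_def algebra_simps)
    have z1: "Bf p \<Sigma> r1 d' = 0" "Bf p \<Sigma> s d' = 0" "Bf p \<Sigma> r1 \<gamma> = 0" "Bf p \<Sigma> s \<gamma> = 0"
      using o1 og d'T g by (auto simp: Orth_def r1_def s_def)
    have z2: "Bf p \<Sigma> r1 s - c * Bf p \<Sigma> s s = 0"
      using Qs by (simp add: c_def Q_Bf)
    have "Bf p \<Sigma> (\<lambda>i. r1 i - c * s i) d =
        d k * (Bf p \<Sigma> r1 s - c * Bf p \<Sigma> s s) + d k * (Bf p \<Sigma> r1 \<gamma> - c * Bf p \<Sigma> s \<gamma>)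
        + (Bf p \<Sigma> r1 d' - c * Bf p \<Sigma> s d')"
      apply (subst deq)
      apply (simp only: Bf_add2 Bf_smult2 Br)
      done
    then show "Bf p \<Sigma> (\<lambda>i. r1 i - c * s i) d = 0" using z1 z2 by simp
  qed
  show ?case using supp orth rr by auto
qed

lemma risk_eq:
  assumes pd: "pos_def p \<Sigma>" and g: "gaussian_vector M p X \<Sigma>" and jp: "j < p"
    and T: "T \<subseteq> {..<p} - {j}" and b: "supp_in \<beta> T"
  shows "pred_risk M p X j \<beta> = quad_form p \<Sigma> (\<lambda>i. (if i = j then 1 else 0) - \<beta> i)"
proof -
  define a where "a = (\<lambda>i. (if i = j then (1::real) else 0) - \<beta> i)"
  have bj: "\<beta> j = 0" using b T by (auto simp: supp_in_def)
  have aj: "a j = 1" using bj by (simp add: a_def)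
  have Qa: "quad_form p \<Sigma> a > 0" using pd aj jp unfolding pos_def_def by (metis one_neq_zero)
  have D: "distributed M lborel (\<lambda>\<omega>. \<Sum>i<p. a i * X i \<omega>)
          (\<lambda>x. ennreal (normal_density 0 (sqrt (quad_form p \<Sigma> a)) x))"
    using g aj jp unfolding gaussian_vector_def by (metis one_neq_zero)
  have eq: "\<And>\<omega>. (\<Sum>i<p. a i * X i \<omega>) = X j \<omega> - (\<Sum>i<p. \<beta> i * X i \<omega>)"
  proof -
    fix \<omega>
    have "(\<Sum>i<p. a i * X i \<omega>) = (\<Sum>i<p. (if i = j then X i \<omega> else 0)) - (\<Sum>i<p. \<beta> i * X i \<omega>)"
    proof -
      have "\<And>i. a i * X i \<omega> = (if i = j then X i \<omega> else 0) - \<beta> i * X i \<omega>"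
        by (simp add: a_def left_diff_distrib)
      then have "(\<Sum>i<p. a i * X i \<omega>) = (\<Sum>i<p. (if i = j then X i \<omega> else 0) - \<beta> i * X i \<omega>)"
        by (intro sum.cong) auto
      then show ?thesis by (simp only: sum_subtractf)
    qed
    also have "(\<Sum>i<p. (if i = j then X i \<omega> else 0)) = X j \<omega>" using jp by simp
    finally show "(\<Sum>i<p. a i * X i \<omega>) = X j \<omega> - (\<Sum>i<p. \<beta> i * X i \<omega>)" .
  qed
  have "(\<integral>x. normal_density 0 (sqrt (quad_form p \<Sigma> a)) x * x^2 \<partial>lborel)
        = (\<integral>\<omega>. (\<Sum>i<p. a i * X i \<omega>)^2 \<partial>M)"
    by (rule distributed_integral[OF D]) auto
  moreover have "(\<integral>x. normal_density 0 (sqrt (quad_form p \<Sigma> a)) x * x^2 \<partial>lborel) = quad_form p \<Sigma> a"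
  proof -
    define \<sigma> where "\<sigma> = sqrt (quad_form p \<Sigma> a)"
    have s2: "\<sigma>\<^sup>2 = quad_form p \<Sigma> a" using Qa by (simp add: \<sigma>_def)
    have sp: "0 < \<sigma>" using Qa by (simp add: \<sigma>_def)
    have "(\<integral>x. normal_density 0 \<sigma> x * (x - 0)^(2*1) \<partial>lborel) = fact (2*1) / ((2 / \<sigma>\<^sup>2)^1 * fact 1)"
      using sp by (rule integral_normal_moment_even)
    also have "fact (2*1) / ((2 / \<sigma>\<^sup>2)^1 * fact 1) = (\<sigma>\<^sup>2::real)"
      using sp by (simp add: fact_numeral)
    finally show ?thesis using s2 by (simp add: \<sigma>_def)
  qed
  moreover have "pred_risk M p X j \<beta> = (\<integral>\<omega>. (\<Sum>i<p. a i * X i \<omega>)^2 \<partial>M)"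
    unfolding pred_risk_def eq ..
  ultimately show ?thesis by (simp add: a_def)
qed

lemma beta_char:
  assumes pd: "pos_def p \<Sigma>" and g: "gaussian_vector M p X \<Sigma>" and jp: "j < p"
    and T: "T \<subseteq> {..<p} - {j}" and b: "supp_in \<beta> T"
    and o: "Orth p \<Sigma> (\<lambda>i. (if i = j then 1 else 0) - \<beta> i) T"
  shows "beta_j M p X j T = \<beta>"
proof -
  define r where "r = (\<lambda>i. (if i = j then (1::real) else 0) - \<beta> i)"
  have key: "pred_risk M p X j \<beta>' = pred_risk M p X j \<beta> + quad_form p \<Sigma> (\<lambda>i. \<beta>' i - \<beta> i)"
    if b': "supp_in \<beta>' T" for \<beta>'
  proof -
    have dT: "supp_in (\<lambda>i. \<beta>' i - \<beta> i) T" using b b' by (auto simp: supp_in_def)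
    have "(\<lambda>i. (if i = j then (1::real) else 0) - \<beta>' i) = (\<lambda>i. r i - (\<beta>' i - \<beta> i))"
      by (auto simp: r_def)
    then have "pred_risk M p X j \<beta>' = quad_form p \<Sigma> (\<lambda>i. r i - (\<beta>' i - \<beta> i))"
      using risk_eq[OF pd g jp T b'] by simp
    also have "\<dots> = quad_form p \<Sigma> r + quad_form p \<Sigma> (\<lambda>i. \<beta>' i - \<beta> i)"
    proof -
      have z: "Bf p \<Sigma> r (\<lambda>i. \<beta>' i - \<beta> i) = 0" using o dT unfolding Orth_def r_def by blast
      show ?thesis by (simp only: Q_diff[OF pd, of r "\<lambda>i. \<beta>' i - \<beta> i"] z mult_zero_right diff_zero)
    qed
    finally show ?thesis using risk_eq[OF pd g jp T b] by (simp add: r_def)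
  qed
  show ?thesis unfolding beta_j_def
  proof (rule the_equality)
    show "supp_in \<beta> T \<and> (\<forall>\<beta>'. supp_in \<beta>' T \<longrightarrow> pred_risk M p X j \<beta> \<le> pred_risk M p X j \<beta>')"
    proof (intro conjI allI impI)
      fix \<beta>' assume "supp_in \<beta>' T"
      then show "pred_risk M p X j \<beta> \<le> pred_risk M p X j \<beta>'"
        using key[of \<beta>'] Q_nonneg[OF pd, of "\<lambda>i. \<beta>' i - \<beta> i"] by linarith
    qed (rule b)
  next
    fix \<beta>' assume h: "supp_in \<beta>' T \<and> (\<forall>\<beta>''. supp_in \<beta>'' T \<longrightarrow> pred_risk M p X j \<beta>' \<le> pred_risk M p X j \<beta>'')"
    then have "pred_risk M p X j \<beta>' \<le> pred_risk M p X j \<beta>" using b by blast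
    then have "quad_form p \<Sigma> (\<lambda>i. \<beta>' i - \<beta> i) \<le> 0" using key[of \<beta>'] h by linarith
    then have "\<And>i. i < p \<Longrightarrow> \<beta>' i - \<beta> i = 0" using Q_le0[OF pd] by blast
    moreover have "\<And>i. \<not> i < p \<Longrightarrow> \<beta>' i = 0 \<and> \<beta> i = 0" using h b T by (auto simp: supp_in_def)
    ultimately show "\<beta>' = \<beta>" by (metis eq_iff_diff_eq_0 ext)
  qed
qed

lemma beta_props:
  assumes pd: "pos_def p \<Sigma>" and g: "gaussian_vector M p X \<Sigma>" and jp: "j < p"
    and T: "T \<subseteq> {..<p} - {j}"
  shows "supp_in (beta_j M p X j T) T \<and> Orth p \<Sigma> (\<lambda>i. (if i = j then 1 else 0) - beta_j M p X j T i) T"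
proof -
  have "finite T" using T finite_subset by blast
  then obtain \<beta> where "supp_in \<beta> T" "Orth p \<Sigma> (\<lambda>i. (if i = j then 1 else 0) - \<beta> i) T"
    using exists_orth[OF pd, of T "\<lambda>i. if i = j then 1 else 0"] T by blast
  moreover then have "beta_j M p X j T = \<beta>" using beta_char[OF pd g jp T] by blast
  ultimately show ?thesis by simp
qed

theorem lemma5:
  fixes M :: "'s measure" and p :: nat and X :: "nat \<Rightarrow> 's \<Rightarrow> real"
    and \<Sigma> :: "nat \<Rightarrow> nat \<Rightarrow> real" and j :: nat and S T1 T2 :: "nat set"
  assumes "pos_def p \<Sigma>"
    and "gaussian_vector M p X \<Sigma>"
    and "j < p"
    and "S \<subseteq> {..<p} - {j}"
    and "T1 \<in> N_j M p X j S"
    and "T2 \<in> N_j M p X j S"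
  shows "T1 \<union> T2 \<in> N_j M p X j S"
proof -
  note pd = assms(1) and g = assms(2) and jp = assms(3)
  define b where "b = beta_j M p X j S"
  define r where "r = (\<lambda>i. (if i = j then (1::real) else 0) - b i)"
  have T1: "T1 \<subseteq> {..<p} - {j}" "beta_j M p X j T1 = b" using assms(5) by (auto simp: N_j_def b_def)
  have T2: "T2 \<subseteq> {..<p} - {j}" "beta_j M p X j T2 = b" using assms(6) by (auto simp: N_j_def b_def)
  have P1: "supp_in b T1" "Orth p \<Sigma> r T1" using beta_props[OF pd g jp T1(1)] T1(2) by (auto simp: r_def)
  have P2: "supp_in b T2" "Orth p \<Sigma> r T2" using beta_props[OF pd g jp T2(1)] T2(2) by (auto simp: r_def)
  have U: "T1 \<union> T2 \<subseteq> {..<p} - {j}" using T1 T2 by auto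
  have sU: "supp_in b (T1 \<union> T2)" using P1 by (auto simp: supp_in_def)
  have oU: "Orth p \<Sigma> r (T1 \<union> T2)"
    unfolding Orth_def
  proof (intro allI impI)
    fix d assume d: "supp_in d (T1 \<union> T2)"
    define d1 where "d1 = (\<lambda>i. if i \<in> T1 then d i else 0)"
    define d2 where "d2 = (\<lambda>i. if i \<in> T1 then 0 else d i)"
    have "supp_in d1 T1" "supp_in d2 T2" using d by (auto simp: supp_in_def d1_def d2_def)
    then have "Bf p \<Sigma> r d1 = 0" "Bf p \<Sigma> r d2 = 0" using P1 P2 by (auto simp: Orth_def)
    moreover have "d = (\<lambda>i. d1 i + d2 i)" by (auto simp: d1_def d2_def)
    ultimately show "Bf p \<Sigma> r d = 0" by (metis Bf_add2 add_0)
  qed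
  have "beta_j M p X j (T1 \<union> T2) = b"
    using beta_char[OF pd g jp U sU] oU by (simp add: r_def)
  then show ?thesis using U by (simp add: N_j_def b_def)
qed

end
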